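(* Let two probabilistically equivalent models (each one of the linear dynamic models described in the context) be written in stacked form as $$T_1x=v,\qquad T_2y=w,$$ where $x,y$ are zero-mean nonsingular Gaussian sequences over $[0,N]$, $T_1,T_2$ are nonsingular matrices determined by the model parameters, and $v,w$ are the zero-mean Gaussian vectors of dynamic noise and boundary values with nonsingular covariances $\mathrm{Cov}(v)=P_1$, $\mathrm{Cov}(w)=P_2$. Then the two models are algebraically equivalent if and only if $$T_2'P_2^{-1}w=T_1'P_1^{-1}v .$$
   Context: Sequences are indexed by $[0,N]=(0,1,\ldots,N)$, $x_k\in\mathbb{R}^d$, $'$ denotes transpose. The models considered are linear dynamic models of the following types: forward/backward Markov, reciprocal, and forward/backward $CM_L$ and $CM_F$ models; each such model with its boundary condition can be written as $Tx=v$ with $T$ nonsingular and $v$ stacking the dynamic noise and boundary values. Two models are probabilistically equivalent (PE) if $x$ and $y$ have the same distribution, and algebraically equivalent (AE) if $x=y$ path-wise. *)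

theory Defs
  imports "HOL-Probability.Probability"
begin

text \<open>A (jointly) Gaussian random vector: measurable, and every linear functional
  of it is either almost surely constant (degenerate Gaussian) or normally distributed.\<close>
definition gaussian_vec :: "'a measure \<Rightarrow> ('a \<Rightarrow> real^'n) \<Rightarrow> bool" where
  "gaussian_vec M X \<longleftrightarrow> X \<in> borel_measurable M \<and>
     (\<forall>a::real^'n. (\<exists>c. AE \<omega> in M. a \<bullet> X \<omega> = c) \<or>
        (\<exists>\<mu> \<sigma>. \<sigma> > 0 \<and> distributed M lborel (\<lambda>\<omega>. a \<bullet> X \<omega>) (\<lambda>t. ennreal (normal_density \<mu> \<sigma> t))))"

definition zero_mean :: "'a measure \<Rightarrow> ('a \<Rightarrow> real^'n) \<Rightarrow> bool" where
  "zero_mean M X \<longleftrightarrow> (\<forall>i. integral\<^sup>L M (\<lambda>\<omega>. X \<omega> $ i) = 0)"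

definition cov_mat :: "'a measure \<Rightarrow> ('a \<Rightarrow> real^'n) \<Rightarrow> real^'n^'n" where
  "cov_mat M X = (\<chi> i j. integral\<^sup>L M (\<lambda>\<omega>.
      (X \<omega> $ i - integral\<^sup>L M (\<lambda>\<eta>. X \<eta> $ i)) * (X \<omega> $ j - integral\<^sup>L M (\<lambda>\<eta>. X \<eta> $ j))))"

definition zm_nonsing_gaussian :: "'a measure \<Rightarrow> ('a \<Rightarrow> real^'n) \<Rightarrow> bool" where
  "zm_nonsing_gaussian M X \<longleftrightarrow> gaussian_vec M X \<and> zero_mean M X \<and> invertible (cov_mat M X)"

definition prob_equiv :: "'a measure \<Rightarrow> ('a \<Rightarrow> real^'n) \<Rightarrow> ('a \<Rightarrow> real^'n) \<Rightarrow> bool" where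
  "prob_equiv M X Y \<longleftrightarrow> distr M borel X = distr M borel Y"

definition alg_equiv :: "'a measure \<Rightarrow> ('a \<Rightarrow> real^'n) \<Rightarrow> ('a \<Rightarrow> real^'n) \<Rightarrow> bool" where
  "alg_equiv M X Y \<longleftrightarrow> (\<forall>\<omega>\<in>space M. X \<omega> = Y \<omega>)"

end

theory Submission
  imports Defs
begin

lemma comp_meas:
  fixes X :: "'a \<Rightarrow> real^'n"
  assumes "X \<in> borel_measurable M"
  shows "(\<lambda>\<omega>. X \<omega> $ i) \<in> borel_measurable M"
  unfolding cart_eq_inner_axis using assms by measurable

lemma gauss_sq_int:
  fixes X :: "'a \<Rightarrow> real^'n"
  assumes P: "prob_space M" and G: "gaussian_vec M X"
  shows "integrable M (\<lambda>\<omega>. (X \<omega> $ i)^2)"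
proof -
  interpret prob_space M by fact
  have Xm[measurable]: "X \<in> borel_measurable M" using G by (simp add: gaussian_vec_def)
  have Xi[measurable]: "\<And>i. (\<lambda>\<omega>. X \<omega> $ i) \<in> borel_measurable M" by (rule comp_meas[OF Xm])
  have eq: "\<And>\<omega>. axis i 1 \<bullet> X \<omega> = X \<omega> $ i" by (simp add: cart_eq_inner_axis inner_commute)
  from G have "(\<exists>c. AE \<omega> in M. X \<omega> $ i = c) \<or>
        (\<exists>\<mu> \<sigma>. \<sigma> > 0 \<and> distributed M lborel (\<lambda>\<omega>. X \<omega> $ i) (\<lambda>t. ennreal (normal_density \<mu> \<sigma> t)))"
    unfolding gaussian_vec_def eq[symmetric] by blast
  then show ?thesis
  proof
    assume "\<exists>c. AE \<omega> in M. X \<omega> $ i = c"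
    then obtain c where c: "AE \<omega> in M. X \<omega> $ i = c" by blast
    have "AE \<omega> in M. (X \<omega> $ i)^2 = c^2" using c by eventually_elim simp
    then have "integrable M (\<lambda>\<omega>. (X \<omega> $ i)^2) \<longleftrightarrow> integrable M (\<lambda>\<omega>. c^2)"
      by (intro integrable_cong_AE) measurable
    then show ?thesis by simp
  next
    assume "\<exists>\<mu> \<sigma>. \<sigma> > 0 \<and> distributed M lborel (\<lambda>\<omega>. X \<omega> $ i) (\<lambda>t. ennreal (normal_density \<mu> \<sigma> t))"
    then obtain \<mu> \<sigma> where s: "\<sigma> > 0" and D: "distributed M lborel (\<lambda>\<omega>. X \<omega> $ i) (\<lambda>t. ennreal (normal_density \<mu> \<sigma> t))"
      by blast
    have i2: "integrable lborel (\<lambda>t. normal_density \<mu> \<sigma> t * (t - \<mu>)^2)"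
      using s by (rule integrable_normal_moment)
    have i1: "integrable lborel (\<lambda>t. normal_density \<mu> \<sigma> t * (t - \<mu>)^1)"
      using s by (rule integrable_normal_moment)
    have i0: "integrable lborel (\<lambda>t. normal_density \<mu> \<sigma> t)" using integrable_normal_density[OF s] by simp
    have "integrable lborel (\<lambda>t. normal_density \<mu> \<sigma> t * (t - \<mu>)^2 + 2 * \<mu> * (normal_density \<mu> \<sigma> t * (t - \<mu>)^1) + \<mu>^2 * normal_density \<mu> \<sigma> t)"
      using i0 i1 i2 by (intro Bochner_Integration.integrable_add Bochner_Integration.integrable_mult_right) auto
    also have "(\<lambda>t. normal_density \<mu> \<sigma> t * (t - \<mu>)^2 + 2 * \<mu> * (normal_density \<mu> \<sigma> t * (t - \<mu>)^1) + \<mu>^2 * normal_density \<mu> \<sigma> t)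
       = (\<lambda>t. normal_density \<mu> \<sigma> t * t^2)"
      by (rule ext) (simp add: power2_eq_square algebra_simps)
    finally have "integrable lborel (\<lambda>t. normal_density \<mu> \<sigma> t * t^2)" .
    then show ?thesis
      using distributed_integrable[OF D, of "\<lambda>t. t^2"] by simp
  qed
qed

lemma gauss_prod_int:
  fixes X :: "'a \<Rightarrow> real^'n"
  assumes P: "prob_space M" and G: "gaussian_vec M X"
  shows "integrable M (\<lambda>\<omega>. X \<omega> $ k * X \<omega> $ l)"
proof (rule Bochner_Integration.integrable_bound[where f="\<lambda>\<omega>. (X \<omega> $ k)^2 + (X \<omega> $ l)^2"])
  have Xm[measurable]: "X \<in> borel_measurable M" using G by (simp add: gaussian_vec_def)
  have Xi[measurable]: "\<And>i. (\<lambda>\<omega>. X \<omega> $ i) \<in> borel_measurable M" by (rule comp_meas[OF Xm])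
  show "integrable M (\<lambda>\<omega>. (X \<omega> $ k)^2 + (X \<omega> $ l)^2)"
    using gauss_sq_int[OF P G, of k] gauss_sq_int[OF P G, of l] by (rule Bochner_Integration.integrable_add)
  show "(\<lambda>\<omega>. X \<omega> $ k * X \<omega> $ l) \<in> borel_measurable M" by measurable
  show "AE \<omega> in M. norm (X \<omega> $ k * X \<omega> $ l) \<le> norm ((X \<omega> $ k)^2 + (X \<omega> $ l)^2)"
  proof (intro AE_I2)
    fix \<omega>
    have "\<bar>X \<omega> $ k * X \<omega> $ l\<bar> \<le> (X \<omega> $ k)^2 + (X \<omega> $ l)^2"
    proof -
      have "2 * (\<bar>X \<omega> $ k\<bar> * \<bar>X \<omega> $ l\<bar>) \<le> (X \<omega> $ k)^2 + (X \<omega> $ l)^2"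
        using sum_squares_bound[of "\<bar>X \<omega> $ k\<bar>" "\<bar>X \<omega> $ l\<bar>"] by (simp add: mult.assoc)
      moreover have "0 \<le> \<bar>X \<omega> $ k\<bar> * \<bar>X \<omega> $ l\<bar>" by simp
      ultimately have "\<bar>X \<omega> $ k\<bar> * \<bar>X \<omega> $ l\<bar> \<le> (X \<omega> $ k)^2 + (X \<omega> $ l)^2" by linarith
      then show ?thesis by (simp add: abs_mult)
    qed
    then show "norm (X \<omega> $ k * X \<omega> $ l) \<le> norm ((X \<omega> $ k)^2 + (X \<omega> $ l)^2)" by simp
  qed
qed


lemma matrix_inv_props:
  fixes A :: "real^'n^'n"
  assumes "invertible A"
  shows "A ** matrix_inv A = mat 1" "matrix_inv A ** A = mat 1"
proof -
  have "\<exists>A'. A ** A' = mat 1 \<and> A' ** A = mat 1" using assms by (simp add: invertible_def)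
  then have "A ** matrix_inv A = mat 1 \<and> matrix_inv A ** A = mat 1"
    unfolding matrix_inv_def by (rule someI_ex)
  then show "A ** matrix_inv A = mat 1" "matrix_inv A ** A = mat 1" by auto
qed

lemma cov_zero_mean:
  assumes "zero_mean M X"
  shows "cov_mat M X = (\<chi> i j. integral\<^sup>L M (\<lambda>\<omega>. X \<omega> $ i * X \<omega> $ j))"
  using assms by (simp add: cov_mat_def zero_mean_def)

lemma cov_linear:
  fixes X V :: "'a \<Rightarrow> real^'n" and A :: "real^'n^'n"
  assumes P: "prob_space M" and G: "gaussian_vec M X" and Z: "zero_mean M X" and ZV: "zero_mean M V"
    and L: "\<forall>\<omega>\<in>space M. A *v X \<omega> = V \<omega>"
  shows "cov_mat M V = A ** cov_mat M X ** transpose A"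
proof -
  have I: "\<And>k l. integrable M (\<lambda>\<omega>. X \<omega> $ k * X \<omega> $ l)" using gauss_prod_int[OF P G] .
  have "integral\<^sup>L M (\<lambda>\<omega>. V \<omega> $ i * V \<omega> $ j) =
        (\<Sum>l\<in>UNIV. (\<Sum>k\<in>UNIV. A $ i $ k * integral\<^sup>L M (\<lambda>\<omega>. X \<omega> $ k * X \<omega> $ l)) * A $ j $ l)" for i j
  proof -
    have "integral\<^sup>L M (\<lambda>\<omega>. V \<omega> $ i * V \<omega> $ j) =
        integral\<^sup>L M (\<lambda>\<omega>. \<Sum>l\<in>UNIV. (\<Sum>k\<in>UNIV. A $ i $ k * (X \<omega> $ k * X \<omega> $ l)) * A $ j $ l)"
    proof (rule Bochner_Integration.integral_cong[OF refl])
      fix \<omega> assume "\<omega> \<in> space M"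
      then have "V \<omega> = A *v X \<omega>" using L by auto
      then show "V \<omega> $ i * V \<omega> $ j = (\<Sum>l\<in>UNIV. (\<Sum>k\<in>UNIV. A $ i $ k * (X \<omega> $ k * X \<omega> $ l)) * A $ j $ l)"
        by (simp add: matrix_vector_mult_def sum_distrib_left sum_distrib_right algebra_simps)
    qed
    also have "\<dots> = (\<Sum>l\<in>UNIV. integral\<^sup>L M (\<lambda>\<omega>. (\<Sum>k\<in>UNIV. A $ i $ k * (X \<omega> $ k * X \<omega> $ l)) * A $ j $ l))"
      using I by (intro Bochner_Integration.integral_sum) (auto intro!: Bochner_Integration.integrable_sum)
    also have "\<dots> = (\<Sum>l\<in>UNIV. (\<Sum>k\<in>UNIV. A $ i $ k * integral\<^sup>L M (\<lambda>\<omega>. X \<omega> $ k * X \<omega> $ l)) * A $ j $ l)"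
      using I by (simp add: Bochner_Integration.integral_sum)
    finally show ?thesis .
  qed
  then show ?thesis
    unfolding cov_zero_mean[OF Z] cov_zero_mean[OF ZV]
    by (simp add: vec_eq_iff matrix_matrix_mult_def transpose_def)
qed


theorem theorem1:
  fixes M :: "'a measure"
    and x y v w :: "'a \<Rightarrow> real^'n"
    and T1 T2 P1 P2 :: "real^'n^'n"
  assumes "prob_space M"
    and "zm_nonsing_gaussian M x" and "zm_nonsing_gaussian M y"
    and "invertible T1" and "invertible T2"
    and "\<forall>\<omega>\<in>space M. T1 *v x \<omega> = v \<omega>"
    and "\<forall>\<omega>\<in>space M. T2 *v y \<omega> = w \<omega>"
    and "zm_nonsing_gaussian M v" and "zm_nonsing_gaussian M w"
    and "cov_mat M v = P1" and "cov_mat M w = P2"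
    and "invertible P1" and "invertible P2"
    and "prob_equiv M x y"
  shows "alg_equiv M x y \<longleftrightarrow>
    (\<forall>\<omega>\<in>space M. transpose T2 *v (matrix_inv P2 *v w \<omega>)
                 = transpose T1 *v (matrix_inv P1 *v v \<omega>))"
proof -
  note A = assms
  have xm[measurable]: "x \<in> borel_measurable M" and ym[measurable]: "y \<in> borel_measurable M"
    using A(2,3) by (auto simp: zm_nonsing_gaussian_def gaussian_vec_def)
  define C where "C = cov_mat M x"
  have Cy: "cov_mat M y = C"
  proof -
    have D: "distr M borel x = distr M borel y" using A(14) by (simp add: prob_equiv_def)
    have ex: "integral\<^sup>L M (\<lambda>\<omega>. f (x \<omega>)) = integral\<^sup>L M (\<lambda>\<omega>. f (y \<omega>))"
      if f: "f \<in> borel_measurable borel" for f :: "real^'n \<Rightarrow> real"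
    proof -
      have "integral\<^sup>L M (\<lambda>\<omega>. f (x \<omega>)) = integral\<^sup>L (distr M borel x) f"
        using f by (simp add: integral_distr)
      also have "\<dots> = integral\<^sup>L (distr M borel y) f" using D by simp
      also have "\<dots> = integral\<^sup>L M (\<lambda>\<omega>. f (y \<omega>))"
        using f by (simp add: integral_distr)
      finally show ?thesis .
    qed
    have m: "(\<lambda>z::real^'n. z $ i) \<in> borel_measurable borel" for i
      by (rule comp_meas) simp
    have "integral\<^sup>L M (\<lambda>\<omega>. x \<omega> $ i) = integral\<^sup>L M (\<lambda>\<omega>. y \<omega> $ i)" for i
      using ex[OF m[of i]] .
    moreover have "integral\<^sup>L M (\<lambda>\<omega>. (x \<omega> $ i - a) * (x \<omega> $ j - b)) =
        integral\<^sup>L M (\<lambda>\<omega>. (y \<omega> $ i - a) * (y \<omega> $ j - b))" for i j a b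
      by (rule ex[of "\<lambda>z. (z $ i - a) * (z $ j - b)"]) (intro borel_measurable_times borel_measurable_diff m, simp_all)
    ultimately show ?thesis unfolding C_def cov_mat_def by simp
  qed
  have Cinv: "invertible C" using A(2) by (simp add: C_def zm_nonsing_gaussian_def)
  have P1: "P1 = T1 ** C ** transpose T1"
    using cov_linear[OF A(1), of x v T1] A(2,6,8,10) by (simp add: zm_nonsing_gaussian_def C_def)
  have P2: "P2 = T2 ** C ** transpose T2"
    using cov_linear[OF A(1), of y w T2] A(3,7,9,11) Cy by (simp add: zm_nonsing_gaussian_def)
  define Ci where "Ci = matrix_inv C"
  have key: "transpose T ** matrix_inv P ** T = Ci"
    if T: "invertible T" and P: "P = T ** C ** transpose T" and Pi: "invertible P" for T P :: "real^'n^'n"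
  proof -
    define R where "R = matrix_inv (transpose T)"
    have TR: "transpose T ** R = mat 1"
      unfolding R_def by (rule matrix_inv_props(1)[OF transpose_invertible[OF T]])
    have "T ** C = P ** R"
      by (metis P TR matrix_mul_assoc matrix_mul_rid)
    then have "transpose T ** matrix_inv P ** T ** C = transpose T ** (matrix_inv P ** P) ** R"
      by (simp add: matrix_mul_assoc[symmetric])
    also have "\<dots> = mat 1" using matrix_inv_props(2)[OF Pi] TR by simp
    finally have Q: "transpose T ** matrix_inv P ** T ** C = mat 1" .
    have "transpose T ** matrix_inv P ** T = transpose T ** matrix_inv P ** T ** (C ** Ci)"
      using matrix_inv_props(1)[OF Cinv] by (simp add: Ci_def)
    also have "\<dots> = Ci" using Q by (simp add: matrix_mul_assoc)
    finally show ?thesis .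
  qed
  have K1: "transpose T1 ** matrix_inv P1 ** T1 = Ci" using key A(4) P1 A(12) by blast
  have K2: "transpose T2 ** matrix_inv P2 ** T2 = Ci" using key A(5) P2 A(13) by blast
  have rhs: "(transpose T2 *v (matrix_inv P2 *v w \<omega>) = transpose T1 *v (matrix_inv P1 *v v \<omega>))
       \<longleftrightarrow> x \<omega> = y \<omega>" if om: "\<omega> \<in> space M" for \<omega>
  proof -
    have "transpose T2 *v (matrix_inv P2 *v w \<omega>) = Ci *v y \<omega>"
      using A(7) om K2 by (simp add: matrix_vector_mul_assoc[symmetric] flip: K2)
    moreover have "transpose T1 *v (matrix_inv P1 *v v \<omega>) = Ci *v x \<omega>"
      using A(6) om K1 by (simp add: matrix_vector_mul_assoc[symmetric] flip: K1)
    moreover have "invertible Ci" unfolding Ci_def invertible_def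
      using matrix_inv_props[OF Cinv] by blast
    ultimately show ?thesis
      using inj_matrix_vector_mult[of Ci] by (auto dest: injD)
  qed
  show ?thesis unfolding alg_equiv_def using rhs by auto
qed

end
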